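(* Let $t_0\in(0,1)$, $\alpha_b\in\mathbb{R}$, $u\in\mathbb{R}$, and put $\alpha_a=(1-u)(-2t_0^2+\alpha_b)+u(2t_0^2+\alpha_b)$, $T=3+t_0^2$, and $F=F(\theta)=1+e^{i\theta_1}+e^{i\theta_2}$ for $\theta\in B=[-\pi,\pi]^2$. Consider the matrix $$M_2^{AA}(\eta,\theta)=\begin{pmatrix}-T\eta-\alpha_a&\bar F&t_0^2&0\\ F&-T\eta-\alpha_b&0&t_0^2\\ t_0^2&0&-T\eta-\alpha_a&\bar F\\ 0&t_0^2&F&-T\eta-\alpha_b\end{pmatrix},$$ and suppose $t_0,\alpha_b$ are such that every root $\eta$ of $\det M_2^{AA}(\eta,\theta)=0$ satisfies $|\eta|\le1$ for all $\theta\in B$. Then the dispersion relation of $H_2^{AA}$ is given by the four branches $$r^{\pm}_{\pm}(\theta)=\frac{\pm\sqrt{|F|^2+t_0^4(1-2u)^2}\pm t_0^2+t_0^2(1-2u)-\alpha_b}{T}$$ (signs chosen independently), and: (a) if $\alpha_a=\alpha_b$, the dispersion relation has Dirac cones; (b) if $\alpha_a=-2t_0^2+\alpha_b$ or $\alpha_a=2t_0^2+\alpha_b$, the dispersion relation has parabolic touches; (c) if $\alpha_a\notin[-2t_0^2+\alpha_b,\,2t_0^2+\alpha_b]$, the dispersion relation has gaps (no two branches touch); (d) if $0<u<1$ and $\alpha_a\ne\alpha_b$, the branches intersect but there are no parabolic or conical touches.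
   Context: $H_2^{AA}$ is the Schrödinger operator $-u''+q_0u$ (with $q_0$ continuous on $[0,1]$ and even, $q_0(x)=q_0(1-x)$) on a periodic quantum graph consisting of two identical hexagonal layers (all edges of length 1) stacked in $AA$ fashion: each type-$A$ vertex of one layer is joined by a vertical edge to the type-$A$ vertex above it, and likewise for type-$B$ vertices. At each vertex $v$ one imposes the modified Neumann (Robin) condition: $u_{a_1}(v)=u_{a_2}(v)=u_{f}(v)/t_0$ for in-layer edges $a_i$ and vertical edges $f$ at $v$, and $\sum_{a}u_a'(v)\pm\sum_f t_0u_f'(v)=\delta_vu(v)$, with $\delta_v=\delta_a$ at type-$A$ and $\delta_v=\delta_b$ at type-$B$ vertices ($t_0\in(0,1]$ models the weak interlayer interaction). Via Floquet theory with quasimomentum $\theta\in B$, for $\lambda$ outside the Dirichlet spectrum of $-d^2/dx^2+q_0$ on $[0,1]$, let $\varphi_0,\varphi_1$ solve $-\varphi''+q_0\varphi=\lambda\varphi$ with $\varphi_0(0)=1,\varphi_0(1)=0,\varphi_1(0)=0,\varphi_1(1)=1$, and set $\eta=\eta(\lambda)=\varphi_1'(1)/\varphi_1'(0)$ (half the Hill discriminant) and $\alpha_k=\delta_k/\varphi_1'(0)$, $k\in\{a,b\}$, treated as real constants. Then $\lambda\in\sigma(H_2^{AA})$ iff $\det M_2^{AA}(\eta(\lambda),\theta)=0$ for some $\theta\in B$; the dispersion relation is identified with the root branches $\eta=r(\theta)$. A Dirac cone is a point $\theta_D$ where two branches meet and there is $\gamma\ne0$ with $r(\theta)-r(\theta_D)=\pm\gamma|\theta-\theta_D|+O(|\theta-\theta_D|^2)$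 on the two branches; a parabolic touch is a point where two branches meet with vanishing first derivative and quadratic behavior around it; "gaps" means the branches are separated (do not touch).
   Formalization: In the definition of a Dirac cone, the distance $|\theta-\theta_D|$ in the linear term is sqrt(h*h + k*k - h*k) for theta - theta_D = (h, k), in place of the Euclidean norm in the coordinates of B. The statement above fails without it. *)

theory Defs
  imports "HOL-Analysis.Analysis" "HOL-Library.Landau_Symbols"
begin

definition Bz :: "(real \<times> real) set" where
  "Bz = {-pi..pi} \<times> {-pi..pi}"

definition Fhex :: "real \<times> real \<Rightarrow> complex" where
  "Fhex \<theta> = 1 + cis (fst \<theta>) + cis (snd \<theta>)"

definition alpha_a :: "real \<Rightarrow> real \<Rightarrow> real \<Rightarrow> real" where
  "alpha_a t0 ab u = (1 - u) * (- 2 * t0^2 + ab) + u * (2 * t0^2 + ab)"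

definition Tc :: "real \<Rightarrow> real" where
  "Tc t0 = 3 + t0^2"

definition M2AA :: "real \<Rightarrow> real \<Rightarrow> real \<Rightarrow> real \<Rightarrow> real \<times> real \<Rightarrow> complex^4^4" where
  "M2AA t0 aa ab \<eta> \<theta> =
     (let F = Fhex \<theta>; T = Tc t0; s = complex_of_real (t0^2);
          da = complex_of_real (- T * \<eta> - aa); db = complex_of_real (- T * \<eta> - ab)
      in vector [vector [da, cnj F, s, 0],
                 vector [F, db, 0, s],
                 vector [s, 0, da, cnj F],
                 vector [0, s, F, db]])"

definition sgnb :: "bool \<Rightarrow> real" where
  "sgnb b = (if b then 1 else -1)"

definition branch :: "real \<Rightarrow> real \<Rightarrow> real \<Rightarrow> bool \<times> bool \<Rightarrow> real \<times> real \<Rightarrow> real" where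
  "branch t0 ab u s \<theta> =
     (sgnb (fst s) * sqrt ((cmod (Fhex \<theta>))^2 + t0^4 * (1 - 2*u)^2)
      + sgnb (snd s) * t0^2 + t0^2 * (1 - 2*u) - ab) / Tc t0"

text \<open>Euclidean distance in physical quasimomentum coordinates (hexagonal reciprocal lattice):
  theta_j = k . a_j with |a_1| = |a_2|, angle 60 degrees; up to a constant factor
  |k|^2 is proportional to h_1^2 + h_2^2 - h_1 h_2.\<close>
definition hexdist :: "real \<times> real \<Rightarrow> real \<times> real \<Rightarrow> real" where
  "hexdist \<theta> \<phi> = (let h1 = fst \<theta> - fst \<phi>; h2 = snd \<theta> - snd \<phi> in sqrt (h1^2 + h2^2 - h1 * h2))"

definition has_dirac_cone :: "('i \<Rightarrow> real \<times> real \<Rightarrow> real) \<Rightarrow> bool" where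
  "has_dirac_cone R \<longleftrightarrow> (\<exists>i j \<theta>D \<gamma>. i \<noteq> j \<and> \<theta>D \<in> Bz \<and> R i \<theta>D = R j \<theta>D \<and> \<gamma> \<noteq> 0 \<and>
      (\<lambda>\<theta>. R i \<theta> - R i \<theta>D - \<gamma> * hexdist \<theta> \<theta>D) \<in> O[at \<theta>D](\<lambda>\<theta>. (norm (\<theta> - \<theta>D))^2) \<and>
      (\<lambda>\<theta>. R j \<theta> - R j \<theta>D + \<gamma> * hexdist \<theta> \<theta>D) \<in> O[at \<theta>D](\<lambda>\<theta>. (norm (\<theta> - \<theta>D))^2))"

definition has_parabolic_touch :: "('i \<Rightarrow> real \<times> real \<Rightarrow> real) \<Rightarrow> bool" where
  "has_parabolic_touch R \<longleftrightarrow> (\<exists>i j \<theta>P. i \<noteq> j \<and> \<theta>P \<in> Bz \<and> R i \<theta>P = R j \<theta>P \<and>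
      (\<forall>k \<in> {i, j}. (R k has_derivative (\<lambda>_. 0)) (at \<theta>P) \<and>
          (\<lambda>\<theta>. R k \<theta> - R k \<theta>P) \<in> \<Theta>[at \<theta>P](\<lambda>\<theta>. (norm (\<theta> - \<theta>P))^2)))"

definition has_gaps :: "('i \<Rightarrow> real \<times> real \<Rightarrow> real) \<Rightarrow> bool" where
  "has_gaps R \<longleftrightarrow> (\<forall>i j. \<forall>\<theta> \<in> Bz. i \<noteq> j \<longrightarrow> R i \<theta> \<noteq> R j \<theta>)"

definition branches_intersect :: "('i \<Rightarrow> real \<times> real \<Rightarrow> real) \<Rightarrow> bool" where
  "branches_intersect R \<longleftrightarrow> (\<exists>i j. \<exists>\<theta> \<in> Bz. i \<noteq> j \<and> R i \<theta> = R j \<theta>)"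

end

theory Submission
  imports Defs "HOL-Probability.Characteristic_Functions"
begin


lemma cis_approx: "cmod (cis x - 1 - \<i> * complex_of_real x) \<le> x^2 / 2"
proof -
  have "cmod (iexp x - (\<Sum>k \<le> 1. (\<i> * x)^k / fact k)) \<le> \<bar>x\<bar>^2 / fact 2"
    using iexp_approx1[of x 1] by (simp add: numeral_2_eq_2)
  moreover have "iexp x = cis x" by (simp add: cis_conv_exp)
  ultimately show ?thesis by (simp add: fact_numeral diff_diff_eq)
qed

definition om :: complex where "om = Complex (-1/2) (sqrt 3/2)"
definition Lf :: "real \<Rightarrow> real \<Rightarrow> complex" where
  "Lf h1 h2 = \<i> * (om * h1 + cnj om * h2)"
definition thD :: "real \<times> real" where "thD = (2*pi/3, -(2*pi/3))"

lemma cis_a0: "cis (2*pi/3) = om" "cis (-(2*pi/3)) = cnj om"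
  by (simp_all add: om_def cis.ctr cos_120 sin_120 complex_cnj)

lemma Lf_norm: "cmod (Lf h1 h2) = sqrt (h1^2 + h2^2 - h1*h2)"
proof -
  have "Lf h1 h2 = Complex (-(sqrt 3/2)*(h1-h2)) (-(h1+h2)/2)"
    by (simp add: Lf_def om_def complex_eq_iff complex_cnj field_simps)
  moreover have "(sqrt 3/2*(h1-h2))^2 + ((h1+h2)/2)^2 = h1^2 + h2^2 - h1*h2"
    by (simp add: power2_eq_square power_mult_distrib field_simps)
  ultimately show ?thesis by (simp add: cmod_def power2_eq_square algebra_simps)
qed

lemma F_approx:
  fixes x y :: real
  shows "cmod (Fhex (x,y) - Lf (x - 2*pi/3) (y + 2*pi/3)) \<le> ((x - 2*pi/3)^2 + (y + 2*pi/3)^2)/2"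
proof -
  define h1 where "h1 = x - 2*pi/3"
  define h2 where "h2 = y + 2*pi/3"
  have x: "x = 2*pi/3 + h1" and y: "y = -(2*pi/3) + h2" by (simp_all add: h1_def h2_def)
  have sum0: "1 + om + cnj om = 0" by (simp add: om_def complex_eq_iff)
  have cnorm: "cmod om = 1" "cmod (cnj om) = 1" by (simp_all add: om_def cmod_def power2_eq_square)
  have "Fhex (x,y) - Lf h1 h2 = (1 + om + cnj om) + om * (cis h1 - 1 - \<i> * h1) + cnj om * (cis h2 - 1 - \<i> * h2)"
  proof -
    have "cis (2*pi/3 + h1) = om * cis h1" "cis (-(2*pi/3) + h2) = cnj om * cis h2"
      by (metis cis_a0(1) cis_mult, metis cis_a0(2) cis_mult)
    then show ?thesis unfolding Fhex_def x y Lf_def fst_conv snd_conv by (simp add: algebra_simps)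
  qed
  also have "\<dots> = om * (cis h1 - 1 - \<i> * h1) + cnj om * (cis h2 - 1 - \<i> * h2)" using sum0 by simp
  finally have "cmod (Fhex (x,y) - Lf h1 h2) \<le> cmod (om * (cis h1 - 1 - \<i> * h1)) + cmod (cnj om * (cis h2 - 1 - \<i> * h2))"
    by (metis norm_triangle_ineq)
  also have "\<dots> \<le> h1^2/2 + h2^2/2"
    using cis_approx[of h1] cis_approx[of h2] by (simp add: norm_mult cnorm)
  finally show ?thesis by (simp add: h1_def h2_def)
qed

lemma hexq_id: "(h1::real)^2 + h2^2 - h1*h2 = (h1-h2)^2/2 + (h1^2+h2^2)/2"
   "(h1::real)^2 + h2^2 - h1*h2 - (h1^2+h2^2)/4 = (h1-h2)^2/2 + (h1^2+h2^2)/4"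
   "9/4*((h1::real)^2 + h2^2) - (h1^2 + h2^2 - h1*h2) = (h1+h2)^2/2 + 3/4*(h1^2+h2^2)"
  by (simp_all add: power2_eq_square field_simps; algebra)+

lemma hexq_nonneg: "0 \<le> (h1::real)^2 + h2^2 - h1*h2"
  unfolding hexq_id(1) by simp

lemma hexdist_sq: "(hexdist \<theta> \<phi>)^2 = (fst \<theta> - fst \<phi>)^2 + (snd \<theta> - snd \<phi>)^2 - (fst \<theta> - fst \<phi>)*(snd \<theta> - snd \<phi>)"
proof -
  have "0 \<le> (fst \<theta> - fst \<phi>)^2 + (snd \<theta> - snd \<phi>)^2 - (fst \<theta> - fst \<phi>)*(snd \<theta> - snd \<phi>)"
    by (rule hexq_nonneg)
  then show ?thesis unfolding hexdist_def Let_def by (simp only: real_sqrt_pow2)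
qed

lemma hexdist_nonneg: "0 \<le> hexdist \<theta> \<phi>" unfolding hexdist_def Let_def by (rule real_sqrt_ge_zero, rule hexq_nonneg)

lemma norm_sq_pair: "(norm (\<theta> - \<phi> :: real \<times> real))^2 = (fst \<theta> - fst \<phi>)^2 + (snd \<theta> - snd \<phi>)^2"
  by (cases \<theta>; cases \<phi>) (simp add: norm_Pair)

lemma hexdist_bounds:
  fixes \<theta> \<phi> :: "real \<times> real"
  shows "norm (\<theta> - \<phi>) / 2 \<le> hexdist \<theta> \<phi>" "hexdist \<theta> \<phi> \<le> 3/2 * norm (\<theta> - \<phi>)"
proof -
  define h1 where "h1 = fst \<theta> - fst \<phi>"
  define h2 where "h2 = snd \<theta> - snd \<phi>"
  have e1: "(hexdist \<theta> \<phi>)^2 = h1^2 + h2^2 - h1*h2" using hexdist_sq h1_def h2_def by simp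
  have e2: "(norm (\<theta> - \<phi>))^2 = h1^2 + h2^2" using norm_sq_pair h1_def h2_def by simp
  have "(norm (\<theta> - \<phi>) / 2)^2 \<le> (hexdist \<theta> \<phi>)^2"
  proof -
    have k: "0 \<le> h1^2+h2^2-h1*h2 - (h1^2+h2^2)/4" unfolding hexq_id(2) by simp
    show ?thesis unfolding power_divide e1 e2 using k by simp
  qed
  then show "norm (\<theta> - \<phi>) / 2 \<le> hexdist \<theta> \<phi>"
    by (rule power2_le_imp_le) (rule hexdist_nonneg)
  have "(hexdist \<theta> \<phi>)^2 \<le> (3/2 * norm (\<theta> - \<phi>))^2"
  proof -
    have k: "0 \<le> 9/4*(h1^2+h2^2) - (h1^2+h2^2-h1*h2)" unfolding hexq_id(3) by simp
    show ?thesis unfolding power_mult_distrib e1 e2 using k by (simp add: power_divide)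
  qed
  then show "hexdist \<theta> \<phi> \<le> 3/2 * norm (\<theta> - \<phi>)"
    by (rule power2_le_imp_le) simp
qed

lemma keyK: "\<bar>cmod (Fhex \<theta>) - hexdist \<theta> thD\<bar> \<le> (norm (\<theta> - thD))^2 / 2"
proof -
  obtain x y where th: "\<theta> = (x,y)" by (cases \<theta>)
  have hd: "hexdist (x,y) thD = cmod (Lf (x - 2*pi/3) (y + 2*pi/3))"
    unfolding Lf_norm hexdist_def th thD_def Let_def by simp
  have "\<bar>cmod (Fhex \<theta>) - hexdist \<theta> thD\<bar> \<le> cmod (Fhex (x,y) - Lf (x - 2*pi/3) (y + 2*pi/3))"
    unfolding th hd by (rule norm_triangle_ineq3)
  also have "\<dots> \<le> ((x - 2*pi/3)^2 + (y + 2*pi/3)^2)/2" by (rule F_approx)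
  also have "\<dots> = (norm (\<theta> - thD))^2 / 2" unfolding norm_sq_pair th thD_def by simp
  finally show ?thesis .
qed

lemma F_thD: "Fhex thD = 0"
  unfolding Fhex_def thD_def using cis_a0 by (simp add: om_def complex_eq_iff)

lemma thD_Bz: "thD \<in> Bz" unfolding thD_def Bz_def by (simp add: field_simps)

lemma F_le3: "cmod (Fhex \<theta>) \<le> 3"
proof -
  have "cmod (Fhex \<theta>) \<le> cmod (1 + cis (fst \<theta>)) + cmod (cis (snd \<theta>))"
    unfolding Fhex_def by (rule norm_triangle_ineq)
  also have "\<dots> \<le> 3" using norm_triangle_ineq[of 1 "cis (fst \<theta>)"] by simp
  finally show ?thesis .
qed

definition Qf :: "real \<times> real \<Rightarrow> real" where
  "Qf \<theta> = (1 + cos (fst \<theta>) + cos (snd \<theta>))^2 + (sin (fst \<theta>) + sin (snd \<theta>))^2"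

lemma Fq: "(cmod (Fhex \<theta>))^2 = Qf \<theta>"
  unfolding Fhex_def Qf_def cmod_power2 by (simp add: cis.sel)

lemma derivO:
  fixes f :: "real \<times> real \<Rightarrow> real"
  assumes "eventually (\<lambda>x. \<bar>f x - f a\<bar> \<le> C * (norm (x - a))^2) (at a)"
  shows "(f has_derivative (\<lambda>_. 0)) (at a)"
  unfolding has_derivative_iff_norm
proof
  show "bounded_linear (\<lambda>_::real\<times>real. 0::real)" by simp
  have "eventually (\<lambda>y. norm (norm (f y - f a - 0) / norm (y - a)) \<le> C * norm (y - a)) (at a)"
    using assms eventually_at_filter[of "\<lambda>x. \<bar>f x - f a\<bar> \<le> C * (norm (x - a))^2" a UNIV]
  proof -
    have "\<forall>\<^sub>F y in at a. y \<noteq> a" by (simp add: eventually_at_filter)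
    with assms show ?thesis
    proof eventually_elim
      case (elim y)
      then have "norm (y - a) > 0" by simp
      then show ?case using elim by (simp add: divide_le_eq power2_eq_square mult.assoc)
    qed
  qed
  moreover have "((\<lambda>y. C * norm (y - a)) \<longlongrightarrow> 0) (at a)"
  proof -
    have "((\<lambda>y. C * norm (y - a)) \<longlongrightarrow> C * norm (a - a)) (at a)"
      by (intro tendsto_intros)
    then show ?thesis by simp
  qed
  ultimately show "((\<lambda>y. norm (f y - f a - 0) / norm (y - a)) \<longlongrightarrow> 0) (at a)"
    by (rule Lim_null_comparison)
qed

lemma Qalg:
  fixes X Y U V :: real
  assumes "X^2 + Y^2 = 1" "U^2 + V^2 = 1"
    and "2*(1+X+U)*(-Y) + 2*(Y+V)*X = 0" "2*(1+X+U)*(-V) + 2*(Y+V)*U = 0"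
    and "(1+X+U)^2 + (Y+V)^2 \<noteq> 0"
  shows "(1+X+U)^2 + (Y+V)^2 = 1 \<or> (1+X+U)^2 + (Y+V)^2 = 9"
proof -
  have V: "V = -Y" using assms(3,4) by (simp add: algebra_simps) 
  then have "Y * (1+X+U) = 0" using assms(3) by (simp add: algebra_simps)
  moreover have "1+X+U \<noteq> 0" using assms(5) V by simp
  ultimately have Y: "Y = 0" by simp
  then have "X^2 = 1" "U^2 = 1" using assms(1,2) V by simp_all
  then have "X = 1 \<or> X = -1" "U = 1 \<or> U = -1" by (simp_all add: power2_eq_1_iff)
  then show ?thesis using V Y by auto
qed

lemma no_cusp:
  fixes \<phi> :: "real \<Rightarrow> real"
  assumes D: "(\<phi> has_real_derivative E) (at a)" and d: "d > 0"
    and B: "\<forall>x. x \<noteq> a \<and> \<bar>x - a\<bar> < d \<longrightarrow> \<bar>\<phi> x - \<phi> a - \<gamma> * \<bar>x - a\<bar>\<bar> \<le> C * (x - a)^2"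
  shows "\<gamma> = 0"
proof -
  have L: "((\<lambda>x. (\<phi> x - \<phi> a) / (x - a)) \<longlongrightarrow> E) (at a)"
    using D by (simp add: has_field_derivative_iff)
  then have LR: "((\<lambda>x. (\<phi> x - \<phi> a) / (x - a)) \<longlongrightarrow> E) (at_right a)"
    and LL: "((\<lambda>x. (\<phi> x - \<phi> a) / (x - a)) \<longlongrightarrow> E) (at_left a)"
    by (simp_all add: filterlim_at_split)
  have C0: "((\<lambda>x. C * \<bar>x - a\<bar>) \<longlongrightarrow> 0) (at x0 within S)" if "x0 = a" for x0 S
  proof -
    have "((\<lambda>x. C * \<bar>x - a\<bar>) \<longlongrightarrow> C * \<bar>x0 - a\<bar>) (at x0 within S)"
      by (intro tendsto_intros)
    then show ?thesis using that by simp
  qed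
  have "((\<lambda>x. (\<phi> x - \<phi> a) / (x - a) - \<gamma>) \<longlongrightarrow> 0) (at_right a)"
  proof (rule Lim_null_comparison[OF _ C0[OF refl]])
    show "\<forall>\<^sub>F x in at_right a. norm ((\<phi> x - \<phi> a) / (x - a) - \<gamma>) \<le> C * \<bar>x - a\<bar>"
      unfolding eventually_at_right_field
    proof (intro exI[of _ "a + d"] conjI allI impI)
      show "a < a + d" using d by simp
      fix x assume x: "a < x" "x < a + d"
      then have "\<bar>\<phi> x - \<phi> a - \<gamma> * (x - a)\<bar> \<le> C * (x - a)^2" using B by auto
      then have "\<bar>\<phi> x - \<phi> a - \<gamma> * (x - a)\<bar> / (x - a) \<le> C * (x - a)"
        using x by (simp add: divide_le_eq power2_eq_square)
      moreover have "(\<phi> x - \<phi> a) / (x - a) - \<gamma> = (\<phi> x - \<phi> a - \<gamma> * (x - a)) / (x - a)"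
        using x by (simp add: field_simps)
      ultimately show "norm ((\<phi> x - \<phi> a) / (x - a) - \<gamma>) \<le> C * \<bar>x - a\<bar>"
        using x by simp
    qed
  qed
  then have "((\<lambda>x. (\<phi> x - \<phi> a) / (x - a)) \<longlongrightarrow> \<gamma>) (at_right a)"
    by (simp add: LIM_zero_iff)
  with LR have e1: "E = \<gamma>" by (intro tendsto_unique[OF _ LR]) simp_all
  have "((\<lambda>x. (\<phi> x - \<phi> a) / (x - a) + \<gamma>) \<longlongrightarrow> 0) (at_left a)"
  proof (rule Lim_null_comparison[OF _ C0[OF refl]])
    show "\<forall>\<^sub>F x in at_left a. norm ((\<phi> x - \<phi> a) / (x - a) + \<gamma>) \<le> C * \<bar>x - a\<bar>"
      unfolding eventually_at_left_field
    proof (intro exI[of _ "a - d"] conjI allI impI)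
      show "a - d < a" using d by simp
      fix x assume x: "a - d < x" "x < a"
      have "\<bar>\<phi> x - \<phi> a - \<gamma> * \<bar>x - a\<bar>\<bar> \<le> C * (x - a)^2" using B x by auto
      moreover have "\<gamma> * \<bar>x - a\<bar> = - (\<gamma> * (x - a))" using x by (simp add: algebra_simps)
      ultimately have "\<bar>\<phi> x - \<phi> a + \<gamma> * (x - a)\<bar> \<le> C * (x - a)^2" by simp
      moreover have "C * (x - a)^2 = (C * (a - x)) * (a - x)" by (simp add: power2_eq_square algebra_simps)
      ultimately have "\<bar>\<phi> x - \<phi> a + \<gamma> * (x - a)\<bar> \<le> (C * (a - x)) * (a - x)"
        by simp
      then have "\<bar>\<phi> x - \<phi> a + \<gamma> * (x - a)\<bar> / (a - x) \<le> C * (a - x)"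
        using x by (simp add: divide_le_eq)
      moreover have "(\<phi> x - \<phi> a) / (x - a) + \<gamma> = - (\<phi> x - \<phi> a + \<gamma> * (x - a)) / (a - x)"
        using x by (simp add: field_simps)
      ultimately show "norm ((\<phi> x - \<phi> a) / (x - a) + \<gamma>) \<le> C * \<bar>x - a\<bar>"
        using x by (simp only: real_norm_def abs_divide abs_minus_cancel) simp
    qed
  qed
  then have "((\<lambda>x. (\<phi> x - \<phi> a) / (x - a)) \<longlongrightarrow> -\<gamma>) (at_left a)"
    using LIM_zero_iff[of "\<lambda>x. (\<phi> x - \<phi> a) / (x - a)" "-\<gamma>" "at_left a"] by simp
  with LL have e2: "E = -\<gamma>" by (intro tendsto_unique[OF _ LL]) simp_all
  from e1 e2 show ?thesis by simp
qed



definition D1 :: "real \<Rightarrow> real \<Rightarrow> real" where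
  "D1 a b = 2*(1+cos a+cos b)*(-sin a) + 2*(sin a+sin b)*cos a"
definition D2 :: "real \<Rightarrow> real \<Rightarrow> real" where
  "D2 a b = 2*(1+cos a+cos b)*(-sin b) + 2*(sin a+sin b)*cos b"

lemma Qf_nonneg: "0 \<le> Qf \<theta>" unfolding Qf_def by simp

lemma dG1:
  assumes pos: "Qf (a,b) + c^2 > 0"
  shows "((\<lambda>x. (\<sigma> * sqrt (Qf (x,b) + c^2) + K) / T) has_real_derivative
           (\<sigma> * (inverse (sqrt (Qf (a,b) + c^2)) / 2 * D1 a b) + 0) / T) (at a)"
proof -
  have h: "((\<lambda>x. Qf (x,b) + c^2) has_real_derivative D1 a b) (at a)"
    unfolding Qf_def D1_def by (auto intro!: derivative_eq_intros simp: algebra_simps)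
  show ?thesis
    by (rule DERIV_cdivide, rule DERIV_add[OF _ DERIV_const], rule DERIV_cmult,
        rule DERIV_chain2[OF DERIV_real_sqrt[OF pos] h])
qed

lemma dG2:
  assumes pos: "Qf (a,b) + c^2 > 0"
  shows "((\<lambda>y. (\<sigma> * sqrt (Qf (a,y) + c^2) + K) / T) has_real_derivative
           (\<sigma> * (inverse (sqrt (Qf (a,b) + c^2)) / 2 * D2 a b) + 0) / T) (at b)"
proof -
  have h: "((\<lambda>y. Qf (a,y) + c^2) has_real_derivative D2 a b) (at b)"
    unfolding Qf_def D2_def by (auto intro!: derivative_eq_intros simp: algebra_simps)
  show ?thesis
    by (rule DERIV_cdivide, rule DERIV_add[OF _ DERIV_const], rule DERIV_cmult,
        rule DERIV_chain2[OF DERIV_real_sqrt[OF pos] h])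
qed

lemma partial_zero:
  assumes G: "((\<lambda>\<theta>. (\<sigma> * sqrt (Qf \<theta> + c^2) + K) / T) has_derivative (\<lambda>_. 0)) (at (a,b))"
    and ne: "\<sigma> \<noteq> 0" "T \<noteq> 0" "c \<noteq> 0"
  shows "D1 a b = 0 \<and> D2 a b = 0"
proof -
  let ?G = "\<lambda>\<theta>. (\<sigma> * sqrt (Qf \<theta> + c^2) + K) / T"
  have z0: "((*) (0::real)) = (\<lambda>x. 0)" by auto
  have pos: "Qf (a,b) + c^2 > 0" using ne Qf_nonneg[of "(a,b)"] by (simp add: add_nonneg_pos)
  have l1: "((\<lambda>x. (x, b)) has_derivative (\<lambda>x. (x, 0))) (at a)"
    by (auto intro!: derivative_eq_intros)
  have l2: "((\<lambda>y. (a, y)) has_derivative (\<lambda>y. (0, y))) (at b)"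
    by (auto intro!: derivative_eq_intros)
  have "((\<lambda>x. ?G (x, b)) has_derivative (\<lambda>x. 0)) (at a)"
    using has_derivative_compose[OF l1, of ?G "\<lambda>_. 0"] G by simp
  then have z1: "((\<lambda>x. ?G (x, b)) has_real_derivative 0) (at a)"
    by (simp add: has_field_derivative_def z0)
  have "((\<lambda>y. ?G (a, y)) has_derivative (\<lambda>x. 0)) (at b)"
    using has_derivative_compose[OF l2, of ?G "\<lambda>_. 0"] G by simp
  then have z2: "((\<lambda>y. ?G (a, y)) has_real_derivative 0) (at b)"
    by (simp add: has_field_derivative_def z0)
  have e1: "(\<sigma> * (inverse (sqrt (Qf (a,b) + c^2)) / 2 * D1 a b) + 0) / T = 0"
    using DERIV_unique[OF dG1[OF pos] z1] .
  have e2: "(\<sigma> * (inverse (sqrt (Qf (a,b) + c^2)) / 2 * D2 a b) + 0) / T = 0"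
    using DERIV_unique[OF dG2[OF pos] z2] .
  show ?thesis using e1 e2 ne pos by auto
qed

lemma Q_crit:
  assumes "D1 a b = 0" "D2 a b = 0" "Qf (a,b) \<noteq> 0"
  shows "Qf (a,b) = 1 \<or> Qf (a,b) = 9"
  using Qalg[of "cos a" "sin a" "cos b" "sin b"] assms unfolding D1_def D2_def Qf_def
  by (simp add: sin_squared_eq algebra_simps)

lemma gbounds:
  assumes t: "0 < t" "t < 1" and n: "norm (\<theta> - thD) < 1/2"
  shows "(norm (\<theta> - thD))^2 / 80 \<le> sqrt (Qf \<theta> + t^2) - t"
        "sqrt (Qf \<theta> + t^2) - t \<le> 4 / t * (norm (\<theta> - thD))^2"
proof -
  define m where "m = norm (\<theta> - thD)"
  define q where "q = Qf \<theta>"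
  define S where "S = sqrt (q + t^2)"
  have m0: "0 \<le> m" "m < 1/2" using n by (simp_all add: m_def)
  have K: "\<bar>cmod (Fhex \<theta>) - hexdist \<theta> thD\<bar> \<le> m^2/2" using keyK m_def by simp
  have hb: "m/2 \<le> hexdist \<theta> thD" "hexdist \<theta> thD \<le> 3/2*m" using hexdist_bounds m_def by auto
  have "m*m \<le> (1/2)*m" by (rule mult_right_mono) (use m0 in auto)
  then have mm: "m^2/2 \<le> m/4" by (simp add: power2_eq_square)
  have Fu: "cmod (Fhex \<theta>) \<le> 2*m" using K hb mm by linarith
  have Fl: "m/4 \<le> cmod (Fhex \<theta>)" using K hb mm by linarith
  have q: "q = (cmod (Fhex \<theta>))^2" using Fq q_def by simp
  have qu: "q \<le> 4*m^2"
    using power_mono[OF Fu norm_ge_zero, of 2] m0 by (simp add: q power_mult_distrib)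
  have ql: "m^2/16 \<le> q"
    using power_mono[OF Fl, of 2] m0 by (simp add: q power_divide)
  have q9: "q \<le> 9" using power_mono[OF F_le3[of \<theta>] norm_ge_zero, of 2] q by simp
  have q0: "0 \<le> q" using q by simp
  have S2: "S^2 = q + t^2" using q0 by (simp add: S_def)
  have St: "t \<le> S" unfolding S_def using q0 t by (simp add: real_le_rsqrt)
  have S4: "S \<le> 4"
  proof -
    have "t * t < 1" using t mult_strict_mono[of t 1 t 1] by simp
    then have "S^2 \<le> 4^2" using S2 q9 by (simp add: power2_eq_square)
    then show ?thesis by (rule power2_le_imp_le) simp
  qed
  have gq: "(S - t) * (S + t) = q" using S2 by (simp add: algebra_simps power2_eq_square)
  have "q / 5 \<le> S - t"
  proof -
    have "(S - t) * (S + t) \<le> (S - t) * 5" by (rule mult_left_mono) (use St S4 t in auto)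
    then have "q \<le> (S - t) * 5" using gq by simp
    then show ?thesis by simp
  qed
  then show "m^2 / 80 \<le> S - t" using ql by simp
  have "(S - t) * (2*t) \<le> (S - t) * (S + t)" by (rule mult_left_mono) (use St t in auto)
  then have "(S - t) * (2*t) \<le> q" using gq by simp
  then have "S - t \<le> q / (2*t)" using t by (simp add: le_divide_eq)
  also have "\<dots> \<le> 4 * m^2 / (2*t)" by (rule divide_right_mono) (use qu t in auto)
  also have "\<dots> \<le> 4 / t * m^2" using t m0 by (simp add: field_simps)
  finally show "S - t \<le> 4 / t * m^2" .
qed



lemma vector_4 [simp]:
 "(vector [x,y,z,w] ::('a::zero)^4)$1 = x"
 "(vector [x,y,z,w] ::('a::zero)^4)$2 = y"
 "(vector [x,y,z,w] ::('a::zero)^4)$3 = z"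
 "(vector [x,y,z,w] ::('a::zero)^4)$4 = w"
  unfolding vector_def by simp_all

lemma det_M2AA: "det (M2AA t0 aa ab \<eta> \<theta>) =
   (let F = Fhex \<theta>; T = Tc t0; s = complex_of_real (t0^2);
          da = complex_of_real (- T * \<eta> - aa); db = complex_of_real (- T * \<eta> - ab)
    in ((da + s) * (db + s) - F * cnj F) * ((da - s) * (db - s) - F * cnj F))"
proof -
  have f1: "finite {2::4, 3, 4}" "1 \<notin> {2::4, 3, 4}" by auto
  have f2: "finite {3::4, 4}" "2 \<notin> {3::4, 4}" by auto
  have f3: "finite {4::4}" "3 \<notin> {4::4}" by auto
  show ?thesis
    unfolding det_def UNIV_4 M2AA_def Let_def
    unfolding sum_over_permutations_insert[OF f1]
    unfolding sum_over_permutations_insert[OF f2]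
    unfolding sum_over_permutations_insert[OF f3]
    unfolding permutes_sing
    apply (simp add: sign_swap_id permutation_swap_id sign_compose sign_id swap_id_eq permutation_compose)
    apply (simp add: algebra_simps)
    done
qed

lemma det_real:
  "det (M2AA t0 aa ab \<eta> \<theta>) = complex_of_real
     (((- Tc t0 * \<eta> - aa + t0^2) * (- Tc t0 * \<eta> - ab + t0^2) - Qf \<theta>) *
      ((- Tc t0 * \<eta> - aa - t0^2) * (- Tc t0 * \<eta> - ab - t0^2) - Qf \<theta>))"
proof -
  have e: "Fhex \<theta> * cnj (Fhex \<theta>) = complex_of_real (Qf \<theta>)"
    using complex_norm_square[of "Fhex \<theta>"] Fq[of \<theta>] by simp
  show ?thesis unfolding det_M2AA Let_def e by simp
qed

lemma ex_bb: "(\<exists>s::bool\<times>bool. P s) \<longleftrightarrow> P (True,True) \<or> P (True,False) \<or> P (False,True) \<or> P (False,False)"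
  by (metis (full_types) old.prod.exhaust)

lemma roots:
  fixes T Q c t ab \<eta> :: real
  assumes T: "T > 0" and Q: "0 \<le> Q"
  shows "((-T*\<eta> - (ab - 2*c) + t)*(-T*\<eta> - ab + t) - Q) * ((-T*\<eta> - (ab - 2*c) - t)*(-T*\<eta> - ab - t) - Q) = 0
     \<longleftrightarrow> (\<exists>s. \<eta> = (sgnb (fst s) * sqrt (Q + c^2) + (sgnb (snd s) * t + c - ab)) / T)"
proof -
  define S where "S = sqrt (Q + c^2)"
  have S2: "S * S = Q + c * c" using Q by (simp add: S_def flip: power2_eq_square)
  have f1: "(-T*\<eta> - (ab - 2*c) + t)*(-T*\<eta> - ab + t) - Q = (-T*\<eta> - ab + t + c - S)*(-T*\<eta> - ab + t + c + S)"
    using S2 by (simp add: algebra_simps)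
  have f2: "(-T*\<eta> - (ab - 2*c) - t)*(-T*\<eta> - ab - t) - Q = (-T*\<eta> - ab - t + c - S)*(-T*\<eta> - ab - t + c + S)"
    using S2 by (simp add: algebra_simps)
  have lin: "\<And>A. (\<eta> = A / T) \<longleftrightarrow> (T*\<eta> = A)" using T by (auto simp: field_simps)
  show ?thesis unfolding f1 f2 ex_bb S_def[symmetric] mult_eq_0_iff lin
    by (simp add: sgnb_def) linarith
qed



theorem mainTheorem2:
  fixes t0 ab u :: real
  defines "aa \<equiv> alpha_a t0 ab u"
  assumes t0: "0 < t0" "t0 < 1"
    and roots_bounded: "\<forall>\<theta> \<in> Bz. \<forall>\<eta>::real. det (M2AA t0 aa ab \<eta> \<theta>) = 0 \<longrightarrow> \<bar>\<eta>\<bar> \<le> 1"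
  shows "(\<forall>\<theta> \<in> Bz. \<forall>\<eta>::real. det (M2AA t0 aa ab \<eta> \<theta>) = 0 \<longleftrightarrow> (\<exists>s. \<eta> = branch t0 ab u s \<theta>))
    \<and> (aa = ab \<longrightarrow> has_dirac_cone (branch t0 ab u))
    \<and> ((aa = - 2 * t0^2 + ab \<or> aa = 2 * t0^2 + ab) \<longrightarrow> has_parabolic_touch (branch t0 ab u))
    \<and> (aa \<notin> {- 2 * t0^2 + ab .. 2 * t0^2 + ab} \<longrightarrow> has_gaps (branch t0 ab u))
    \<and> ((0 < u \<and> u < 1 \<and> aa \<noteq> ab) \<longrightarrow>
         branches_intersect (branch t0 ab u) \<and> \<not> has_parabolic_touch (branch t0 ab u)
         \<and> \<not> has_dirac_cone (branch t0 ab u))"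
proof -
  define t where "t = t0^2"
  define c where "c = t0^2 * (1 - 2*u)"
  define T where "T = Tc t0"
  have t_pos: "0 < t" using t0 by (simp add: t_def)
  have t_lt: "t < 1" using t0 mult_strict_mono[of t0 1 t0 1] by (simp add: t_def power2_eq_square)
  have T_pos: "0 < T" by (simp add: T_def Tc_def add_pos_nonneg)
  have aa_eq: "aa = ab - 2*c" unfolding aa_def alpha_a_def c_def by (simp add: algebra_simps)
  have c4: "t0^4 * (1 - 2*u)^2 = c^2" unfolding c_def by (simp add: power_mult_distrib flip: power_mult)
  have br: "\<And>s. branch t0 ab u s = (\<lambda>\<theta>. (sgnb (fst s) * sqrt (Qf \<theta> + c^2) + (sgnb (snd s) * t + c - ab)) / T)"
    unfolding branch_def Fq c4 c_def[symmetric] unfolding t_def[symmetric] T_def[symmetric] by (simp add: fun_eq_iff algebra_simps)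
  have Qn: "\<And>\<theta>. 0 \<le> Qf \<theta>" by (rule Qf_nonneg)

  have P1: "\<forall>\<theta> \<in> Bz. \<forall>\<eta>::real. det (M2AA t0 aa ab \<eta> \<theta>) = 0 \<longleftrightarrow> (\<exists>s. \<eta> = branch t0 ab u s \<theta>)"
  proof (intro ballI allI)
    fix \<theta> \<eta>
    show "det (M2AA t0 aa ab \<eta> \<theta>) = 0 \<longleftrightarrow> (\<exists>s. \<eta> = branch t0 ab u s \<theta>)"
      unfolding det_real aa_eq T_def[symmetric] t_def[symmetric] of_real_eq_0_iff br
      using roots[OF T_pos Qn[of \<theta>], of \<eta> ab c t] by simp
  qed

  have Pa: "aa = ab \<longrightarrow> has_dirac_cone (branch t0 ab u)"
  proof
    assume "aa = ab"
    then have c0: "c = 0" using aa_eq by simp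
    have sq: "\<And>\<theta>. sqrt (Qf \<theta>) = cmod (Fhex \<theta>)" by (simp add: Fq[symmetric])
    define i :: "bool \<times> bool" where "i = (True, True)"
    define j :: "bool \<times> bool" where "j = (False, True)"
    have Ri: "branch t0 ab u i = (\<lambda>\<theta>. (cmod (Fhex \<theta>) + (t - ab)) / T)"
      unfolding br i_def by (simp add: sq c0 sgnb_def)
    have Rj: "branch t0 ab u j = (\<lambda>\<theta>. (- cmod (Fhex \<theta>) + (t - ab)) / T)"
      unfolding br j_def by (simp add: sq c0 sgnb_def)
    have bnd: "\<bar>\<sigma> * (cmod (Fhex \<theta>) - hexdist \<theta> thD) / T\<bar> \<le> 1 / (2*T) * \<bar>(norm (\<theta> - thD))^2\<bar>"
      if "\<bar>\<sigma>\<bar> = 1" for \<theta> and \<sigma> :: real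
    proof -
      have "\<bar>\<sigma> * (cmod (Fhex \<theta>) - hexdist \<theta> thD) / T\<bar> = \<bar>cmod (Fhex \<theta>) - hexdist \<theta> thD\<bar> / T"
        using that T_pos by (simp add: abs_mult)
      also have "\<dots> \<le> ((norm (\<theta> - thD))^2 / 2) / T"
        by (rule divide_right_mono) (use keyK T_pos in auto)
      finally show ?thesis by simp
    qed
    show "has_dirac_cone (branch t0 ab u)"
      unfolding has_dirac_cone_def
    proof (rule exI[of _ i], rule exI[of _ j], rule exI[of _ thD], rule exI[of _ "1/T"], intro conjI)
      show "i \<noteq> j" by (simp add: i_def j_def)
      show "thD \<in> Bz" by (rule thD_Bz)
      show "branch t0 ab u i thD = branch t0 ab u j thD" by (simp add: Ri Rj F_thD)
      show "1 / T \<noteq> 0" using T_pos by simp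
      show "(\<lambda>\<theta>. branch t0 ab u i \<theta> - branch t0 ab u i thD - 1 / T * hexdist \<theta> thD)
              \<in> O[at thD](\<lambda>\<theta>. (norm (\<theta> - thD))^2)"
      proof (rule bigoI[where c = "1/(2*T)"], rule always_eventually, rule allI)
        fix \<theta>
        have "branch t0 ab u i \<theta> - branch t0 ab u i thD - 1 / T * hexdist \<theta> thD
              = 1 * (cmod (Fhex \<theta>) - hexdist \<theta> thD) / T"
          using T_pos by (simp add: Ri F_thD field_simps)
        then show "norm (branch t0 ab u i \<theta> - branch t0 ab u i thD - 1 / T * hexdist \<theta> thD)
              \<le> 1 / (2*T) * norm ((norm (\<theta> - thD))^2)"
          using bnd[of 1 \<theta>] by (simp only: real_norm_def)
      qed
      show "(\<lambda>\<theta>. branch t0 ab u j \<theta> - branch t0 ab u j thD + 1 / T * hexdist \<theta> thD)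
              \<in> O[at thD](\<lambda>\<theta>. (norm (\<theta> - thD))^2)"
      proof (rule bigoI[where c = "1/(2*T)"], rule always_eventually, rule allI)
        fix \<theta>
        have "branch t0 ab u j \<theta> - branch t0 ab u j thD + 1 / T * hexdist \<theta> thD
              = (-1) * (cmod (Fhex \<theta>) - hexdist \<theta> thD) / T"
          using T_pos by (simp add: Rj F_thD field_simps)
        then show "norm (branch t0 ab u j \<theta> - branch t0 ab u j thD + 1 / T * hexdist \<theta> thD)
              \<le> 1 / (2*T) * norm ((norm (\<theta> - thD))^2)"
          using bnd[of "-1" \<theta>] by (simp only: real_norm_def)
      qed
    qed
  qed

  have Pb: "(aa = - 2 * t0^2 + ab \<or> aa = 2 * t0^2 + ab) \<longrightarrow> has_parabolic_touch (branch t0 ab u)"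
  proof
    assume "aa = - 2 * t0^2 + ab \<or> aa = 2 * t0^2 + ab"
    then have "c = t \<or> c = -t" using aa_eq by (auto simp: t_def)
    then have cc: "c^2 = t^2" by auto
    define g where "g \<theta> = sqrt (Qf \<theta> + t^2) - t" for \<theta>
    have QD: "Qf thD = 0" using Fq[of thD] F_thD by simp
    have SD: "sqrt (Qf thD + t^2) = t" using QD t_pos by simp
    have d1: "branch t0 ab u (True,False) \<theta> - branch t0 ab u (True,False) thD = 1 * g \<theta> / T" for \<theta>
      unfolding br using SD by (simp add: cc g_def sgnb_def diff_divide_distrib[symmetric])
    have d2: "branch t0 ab u (False,True) \<theta> - branch t0 ab u (False,True) thD = (-1) * g \<theta> / T" for \<theta>
      unfolding br using SD by (simp add: cc g_def sgnb_def diff_divide_distrib[symmetric])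
    have eqD: "branch t0 ab u (True,False) thD = branch t0 ab u (False,True) thD"
      unfolding br using SD by (simp add: cc sgnb_def)
    have ev: "eventually (\<lambda>\<theta>. norm (\<theta> - thD) < 1/2) (at thD)"
      unfolding eventually_at by (rule exI[of _ "1/2"]) (simp add: dist_norm)
    have gen: "(f has_derivative (\<lambda>_. 0)) (at thD) \<and>
               (\<lambda>\<theta>. f \<theta> - f thD) \<in> \<Theta>[at thD](\<lambda>\<theta>. (norm (\<theta> - thD))^2)"
      if fd: "\<And>\<theta>. f \<theta> - f thD = \<sigma> * g \<theta> / T" and s1: "\<bar>\<sigma>\<bar> = 1" for f and \<sigma> :: real
    proof -
      have bnd: "eventually (\<lambda>\<theta>. 1/(80*T) * (norm (\<theta> - thD))^2 \<le> \<bar>f \<theta> - f thD\<bar> \<and>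
                     \<bar>f \<theta> - f thD\<bar> \<le> 4/t/T * (norm (\<theta> - thD))^2) (at thD)"
        using ev
      proof eventually_elim
        case (elim \<theta>)
        have gb: "(norm (\<theta> - thD))^2 / 80 \<le> g \<theta>" "g \<theta> \<le> 4 / t * (norm (\<theta> - thD))^2"
          using gbounds[OF t_pos t_lt elim] by (simp_all add: g_def)
        have "0 \<le> (norm (\<theta> - thD))^2 / 80" by simp
        then have g0: "0 \<le> g \<theta>" using gb(1) by linarith
        have ab: "\<bar>f \<theta> - f thD\<bar> = g \<theta> / T"
          using fd[of \<theta>] s1 g0 T_pos by (simp add: abs_mult)
        have "1/(80*T) * (norm (\<theta> - thD))^2 = ((norm (\<theta> - thD))^2 / 80) / T" by simp
        also have "\<dots> \<le> g \<theta> / T" by (rule divide_right_mono) (use gb T_pos in auto)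
        finally have l: "1/(80*T) * (norm (\<theta> - thD))^2 \<le> \<bar>f \<theta> - f thD\<bar>" using ab by simp
        have "g \<theta> / T \<le> (4 / t * (norm (\<theta> - thD))^2) / T" by (rule divide_right_mono) (use gb T_pos in auto)
        then have u: "\<bar>f \<theta> - f thD\<bar> \<le> 4/t/T * (norm (\<theta> - thD))^2" using ab by simp
        from l u show ?case by simp
      qed
      have "(f has_derivative (\<lambda>_. 0)) (at thD)"
        by (rule derivO[where C = "4/t/T"]) (use bnd in \<open>auto elim: eventually_mono\<close>)
      moreover have "(\<lambda>\<theta>. f \<theta> - f thD) \<in> \<Theta>[at thD](\<lambda>\<theta>. (norm (\<theta> - thD))^2)"
        by (rule bigthetaI'[of "1/(80*T)" "4/t/T"])
           (use T_pos t_pos bnd in \<open>auto elim: eventually_mono\<close>)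
      ultimately show ?thesis ..
    qed
    show "has_parabolic_touch (branch t0 ab u)"
      unfolding has_parabolic_touch_def
    proof (rule exI[of _ "(True,False)"], rule exI[of _ "(False,True)"], rule exI[of _ thD], intro conjI)
      show "(True, False) \<noteq> (False, True)" by simp
      show "thD \<in> Bz" by (rule thD_Bz)
      show "branch t0 ab u (True,False) thD = branch t0 ab u (False,True) thD" by (rule eqD)
      show "\<forall>k\<in>{(True, False), (False, True)}.
              (branch t0 ab u k has_derivative (\<lambda>_. 0)) (at thD) \<and>
              (\<lambda>\<theta>. branch t0 ab u k \<theta> - branch t0 ab u k thD) \<in> \<Theta>[at thD](\<lambda>\<theta>. (norm (\<theta> - thD))^2)"
        using gen[OF d1] gen[OF d2] by simp
    qed
  qed

  have Pc: "aa \<notin> {- 2 * t0^2 + ab .. 2 * t0^2 + ab} \<longrightarrow> has_gaps (branch t0 ab u)"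
  proof
    assume "aa \<notin> {- 2 * t0^2 + ab .. 2 * t0^2 + ab}"
    then have ct: "t < \<bar>c\<bar>" using aa_eq by (auto simp: t_def)
    show "has_gaps (branch t0 ab u)" unfolding has_gaps_def
    proof (intro allI ballI impI)
      fix i j :: "bool \<times> bool" and \<theta> assume "\<theta> \<in> Bz" "i \<noteq> j"
      define S where "S = sqrt (Qf \<theta> + c^2)"
      have "sqrt (c^2) \<le> S" unfolding S_def using Qn[of \<theta>] by (simp only: real_sqrt_le_mono add_increasing)
      then have St: "t < S" using ct by simp
      have key: "sgnb (fst i) * S + sgnb (snd i) * t \<noteq> sgnb (fst j) * S + sgnb (snd j) * t"
        using \<open>i \<noteq> j\<close> St t_pos
        by (cases "fst i"; cases "snd i"; cases "fst j"; cases "snd j") (auto simp: sgnb_def prod_eq_iff)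
      show "branch t0 ab u i \<theta> \<noteq> branch t0 ab u j \<theta>"
      proof
        assume "branch t0 ab u i \<theta> = branch t0 ab u j \<theta>"
        then have "sgnb (fst i) * S + (sgnb (snd i) * t + c - ab) = sgnb (fst j) * S + (sgnb (snd j) * t + c - ab)"
          unfolding br S_def[symmetric] using T_pos by simp
        with key show False by simp
      qed
    qed
  qed

  have Pd: "(0 < u \<and> u < 1 \<and> aa \<noteq> ab) \<longrightarrow>
         branches_intersect (branch t0 ab u) \<and> \<not> has_parabolic_touch (branch t0 ab u)
         \<and> \<not> has_dirac_cone (branch t0 ab u)"
  proof
    assume H: "0 < u \<and> u < 1 \<and> aa \<noteq> ab"
    have c0: "c \<noteq> 0" using H aa_eq by auto
    have u1: "\<bar>1 - 2*u\<bar> < 1" using H by auto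
    have cabs: "\<bar>c\<bar> = t * \<bar>1 - 2*u\<bar>" using t0 by (simp add: c_def t_def abs_mult)
    have "t * \<bar>1 - 2*u\<bar> < t * 1" by (rule mult_strict_left_mono) (use u1 t_pos in auto)
    then have ct: "\<bar>c\<bar> < t" using cabs by simp
    have c2t: "c^2 < t^2" using ct power_strict_mono[of "\<bar>c\<bar>" t 2] by simp
    have Spos: "\<And>\<theta>. 0 < Qf \<theta> + c^2" using c0 Qn by (simp add: add_nonneg_pos)
    have I: "branches_intersect (branch t0 ab u)"
    proof -
      define r where "r = sqrt (t^2 - c^2)"
      have r0: "0 \<le> r" using c2t by (simp add: r_def)
      have "sqrt (t^2 - c^2) \<le> sqrt (t^2)" by (rule real_sqrt_le_mono) simp
      then have rt: "r \<le> t" unfolding r_def using t_pos by simp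
      have r2: "r^2 = t^2 - c^2" using c2t by (simp add: r_def)
      define s0 where "s0 = arccos ((r-1)/2)"
      have rng: "-1 \<le> (r-1)/2" "(r-1)/2 \<le> 1" using r0 rt t_lt by auto
      have cs: "cos s0 = (r-1)/2" unfolding s0_def by (rule cos_arccos[OF rng])
      have s0r: "0 \<le> s0" "s0 \<le> pi" using rng by (simp_all add: s0_def arccos_lbound arccos_ubound)
      have "Qf (s0, -s0) = (1 + 2 * cos s0)^2" unfolding Qf_def by (simp add: add.commute)
      also have "1 + 2 * cos s0 = r" using cs by simp
      also have "r^2 = t^2 - c^2" by (rule r2)
      finally have "sqrt (Qf (s0, -s0) + c^2) = t" using t_pos by simp
      moreover have "(s0, -s0) \<in> Bz" using s0r by (simp add: Bz_def)
      ultimately show ?thesis unfolding branches_intersect_def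
        by (intro exI[of _ "(True,False)"] exI[of _ "(False,True)"] bexI[of _ "(s0,-s0)"])
           (simp_all add: br sgnb_def)
    qed
    have meet: "Qf \<theta> = t^2 - c^2"
      if ij: "i \<noteq> j" and eq: "branch t0 ab u i \<theta> = branch t0 ab u j \<theta>" for i j \<theta>
    proof -
      define S where "S = sqrt (Qf \<theta> + c^2)"
      have S0: "0 < S" using Spos[of \<theta>] by (simp add: S_def)
      have "sgnb (fst i) * S + (sgnb (snd i) * t + c - ab) = sgnb (fst j) * S + (sgnb (snd j) * t + c - ab)"
        using eq unfolding br S_def[symmetric] using T_pos by simp
      then have "S = t" using ij S0 t_pos
        by (cases "fst i"; cases "snd i"; cases "fst j"; cases "snd j") (auto simp: sgnb_def prod_eq_iff)
      then have "S^2 = t^2" by simp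
      then show ?thesis using Spos[of \<theta>] by (simp add: S_def)
    qed
    have NP: "\<not> has_parabolic_touch (branch t0 ab u)"
    proof
      assume "has_parabolic_touch (branch t0 ab u)"
      then obtain i j \<theta>P where ij: "i \<noteq> j" and eq: "branch t0 ab u i \<theta>P = branch t0 ab u j \<theta>P"
        and dv: "(branch t0 ab u i has_derivative (\<lambda>_. 0)) (at \<theta>P)"
        unfolding has_parabolic_touch_def by blast
      obtain a b where thP: "\<theta>P = (a,b)" by (cases \<theta>P)
      have Qv: "Qf (a,b) = t^2 - c^2" using meet[OF ij eq] thP by simp
      have "D1 a b = 0 \<and> D2 a b = 0"
        by (rule partial_zero[where \<sigma> = "sgnb (fst i)" and K = "sgnb (snd i) * t + c - ab" and T = T and c = c])
           (use dv thP c0 T_pos in \<open>auto simp: br sgnb_def\<close>)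
      moreover have "Qf (a,b) \<noteq> 0" using Qv c2t by simp
      ultimately have "Qf (a,b) = 1 \<or> Qf (a,b) = 9" using Q_crit by blast
      moreover have "t^2 < 1" using t_pos t_lt power_strict_mono[of t 1 2] by simp
      moreover have "0 \<le> c^2" by simp
      ultimately show False using Qv by linarith
    qed
    have ND: "\<not> has_dirac_cone (branch t0 ab u)"
    proof
      assume "has_dirac_cone (branch t0 ab u)"
      then obtain i j \<theta>D \<gamma> where g0: "\<gamma> \<noteq> 0" and
        O: "(\<lambda>\<theta>. branch t0 ab u i \<theta> - branch t0 ab u i \<theta>D - \<gamma> * hexdist \<theta> \<theta>D) \<in> O[at \<theta>D](\<lambda>\<theta>. (norm (\<theta> - \<theta>D))^2)"
        unfolding has_dirac_cone_def by blast
      obtain a b where thD': "\<theta>D = (a,b)" by (cases \<theta>D)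
      from O obtain C where "eventually (\<lambda>\<theta>. norm (branch t0 ab u i \<theta> - branch t0 ab u i \<theta>D - \<gamma> * hexdist \<theta> \<theta>D)
            \<le> C * norm ((norm (\<theta> - \<theta>D))^2)) (at \<theta>D)"
        by (elim landau_o.bigE) auto
      then obtain d where d: "d > 0" and dB: "\<And>\<theta>. \<theta> \<noteq> \<theta>D \<Longrightarrow> dist \<theta> \<theta>D < d \<Longrightarrow>
           norm (branch t0 ab u i \<theta> - branch t0 ab u i \<theta>D - \<gamma> * hexdist \<theta> \<theta>D) \<le> C * norm ((norm (\<theta> - \<theta>D))^2)"
        unfolding eventually_at by auto
      define \<phi> where "\<phi> x = branch t0 ab u i (x, b)" for x
      have D: "(\<phi> has_real_derivative
           (sgnb (fst i) * (inverse (sqrt (Qf (a,b) + c^2)) / 2 * D1 a b) + 0) / T) (at a)"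
        using dG1[OF Spos[of "(a,b)"], of "sgnb (fst i)" "sgnb (snd i) * t + c - ab" T]
        unfolding \<phi>_def br by simp
      have B: "\<forall>x. x \<noteq> a \<and> \<bar>x - a\<bar> < d \<longrightarrow> \<bar>\<phi> x - \<phi> a - \<gamma> * \<bar>x - a\<bar>\<bar> \<le> C * (x - a)^2"
      proof (intro allI impI)
        fix x assume x: "x \<noteq> a \<and> \<bar>x - a\<bar> < d"
        have "(x,b) \<noteq> \<theta>D" "dist (x,b) \<theta>D < d" using x thD' by (simp_all add: dist_Pair_Pair dist_real_def)
        from dB[OF this] have "norm (branch t0 ab u i (x,b) - branch t0 ab u i \<theta>D - \<gamma> * hexdist (x,b) \<theta>D)
            \<le> C * norm ((norm ((x,b) - \<theta>D))^2)" .
        moreover have "hexdist (x,b) \<theta>D = \<bar>x - a\<bar>" by (simp add: hexdist_def thD')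
        moreover have "(norm ((x,b) - \<theta>D))^2 = (x - a)^2" by (simp add: norm_sq_pair thD')
        ultimately show "\<bar>\<phi> x - \<phi> a - \<gamma> * \<bar>x - a\<bar>\<bar> \<le> C * (x - a)^2" by (simp add: \<phi>_def thD')
      qed
      have "\<gamma> = 0" by (rule no_cusp[OF D d B])
      with g0 show False by simp
    qed
    show "branches_intersect (branch t0 ab u) \<and> \<not> has_parabolic_touch (branch t0 ab u)
         \<and> \<not> has_dirac_cone (branch t0 ab u)" using I NP ND by blast
  qed
  show ?thesis using P1 Pa Pb Pc Pd by blast
qed


end
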